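(* Assume (A4) holds at $\bar u_{\bar e}$ and that there is $\sigma>0$ with $\beta+\bar e_\beta-(\alpha+\bar e_\alpha)\ge\sigma$ a.e. on $\Omega$. Take $0<\eta<\sigma/4$. Let $e\in B_\eta(\bar e)$ and let $\bar u_e\in\mathcal U_{ad}(e)$ satisfy the perturbed first-order optimality system, i.e. $\int_\Omega\varphi_{\bar u_e,e}(u-\bar u_e)dx\ge0$ for all $u\in\mathcal U_{ad}(e)$. Then there exist constants $c>0$, $\kappa'>0$ independent of $e$, and a control $u_e\in\mathcal U_{ad}(\bar e)$ with $\|\bar u_e-u_e\|_{L^\infty(\Omega)}\le\|e-\bar e\|_E$, such that $(\mathcal J'_u(\bar u_e,e)-\mathcal J'_u(\bar u_{\bar e},\bar e))(\bar u_{\bar e}-\bar u_e)\ge\kappa'\|\bar u_e-\bar u_{\bar e}\|_{L^1(\Omega)}^{1+1/\varkappa}+\frac12\mathcal J'_u(\bar u_{\bar e},\bar e)(u_e-\bar u_{\bar e})-c\big(\|e-\bar e\|_E^{1/\varkappa}+\|\varphi_{\bar u_e,e}-\varphi_{\bar u_{\bar e},\bar e}\|_{L^\infty(\Omega)}+\|\bar u_e-\bar u_{\bar e}\|_{L^1(\Omega)}\big)\|e-\bar e\|_E$.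
   Context: Let $\Omega\subset\mathbb R^N$, $N\in\{1,2,3\}$, be an open bounded domain with Lipschitz boundary $\Gamma$; $\alpha,\beta\in L^\infty(\Omega)$, $\alpha\le\beta$. $Ay=-\sum_{i,j}\partial_{x_j}(a_{ij}\partial_{x_i}y)$, $a_{ij}\in C(\bar\Omega)$ uniformly elliptic. $L,f$ Carathéodory, $C^2$ in $y$, satisfying (A1) $f(\cdot,0)\in L^{\bar p}$, $\bar p>N/2$, $\partial f/\partial y\ge0$, $|\partial f/\partial y|+|\partial^2f/\partial y^2|\le C_{f,M}$ for $|y|\le M$, $\partial^2f/\partial y^2(x,\cdot)$ uniformly continuous on $[-M,M]$ uniformly in $x$; (A2) $L(\cdot,0)\in L^1$, $|\partial L/\partial y|\le\psi_M\in L^{\bar p}$, $|\partial^2L/\partial y^2|\le C_{L,M}$ for $|y|\le M$, $\partial^2L/\partial y^2(x,\cdot)$ uniformly continuous likewise. $y_u$ solves $Ay+f(x,y)=u$, $y=0$ on $\Gamma$; $J(u)=\int_\Omega L(x,y_u)dx$. $E=L^2(\Omega)^2\times L^\infty(\Omega)^2$, $e=(e_y,e_J,e_\alpha,e_\beta)$ with the sum norm; $\mathcal U_{ad}(e)=\{u\in L^1:\alpha+e_\alpha\le u\le\beta+e_\beta\text{ a.e.}\}$; $\mathcal J(u,e)=J(u+e_y)+(e_J,y_{u+e_y})_{L^2}$. $\varphi_{u,e}$ solves $A^*\varphi+\frac{\partial f}{\partial y}(x,y_{u+e_y})\varphi=\frac{\partial L}{\partial y}(x,y_{u+e_y})+e_J$,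 $\varphi=0$ on $\Gamma$, so that $\mathcal J'_u(u,e)v=\int_\Omega\varphi_{u,e}v\,dx$. (A4) at $\bar u_{\bar e}$: $\bar u_{\bar e}\in\mathcal U_{ad}(\bar e)$, with adjoint state $\varphi_{\bar u_{\bar e}}$ (solution of $A^*\varphi+\frac{\partial f}{\partial y}(x,y_{\bar u_{\bar e}})\varphi=\frac{\partial L}{\partial y}(x,y_{\bar u_{\bar e}})$, $\varphi=0$ on $\Gamma$), satisfies $\int_\Omega\varphi_{\bar u_{\bar e}}(u-\bar u_{\bar e})\ge0$ for all $u\in\mathcal U_{ad}(\bar e)$ and there are $K,\varkappa>0$ with $|\{x:|\varphi_{\bar u_{\bar e}}(x)|\le\varepsilon\}|\le K\varepsilon^\varkappa$ for all $\varepsilon>0$. *)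

theory Defs
  imports "HOL-Analysis.Analysis" "HOL-Probability.Essential_Supremum"
begin

type_synonym 'n fn = "real^'n \<Rightarrow> real"

type_synonym 'n pert = "'n fn \<times> 'n fn \<times> 'n fn \<times> 'n fn"

definition Lp_mem :: "(real^'n) set \<Rightarrow> real \<Rightarrow> 'n fn \<Rightarrow> bool" where
  "Lp_mem \<Omega> p g \<longleftrightarrow> g \<in> borel_measurable (lebesgue_on \<Omega>)
      \<and> integrable (lebesgue_on \<Omega>) (\<lambda>x. \<bar>g x\<bar> powr p)"

definition L2_mem :: "(real^'n) set \<Rightarrow> 'n fn \<Rightarrow> bool" where
  "L2_mem \<Omega> g \<longleftrightarrow> g \<in> borel_measurable (lebesgue_on \<Omega>)
      \<and> integrable (lebesgue_on \<Omega>) (\<lambda>x. (g x)\<^sup>2)"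

definition Linf_mem :: "(real^'n) set \<Rightarrow> 'n fn \<Rightarrow> bool" where
  "Linf_mem \<Omega> g \<longleftrightarrow> g \<in> borel_measurable (lebesgue_on \<Omega>)
      \<and> (\<exists>C. AE x in lebesgue_on \<Omega>. \<bar>g x\<bar> \<le> C)"

definition L1_norm :: "(real^'n) set \<Rightarrow> 'n fn \<Rightarrow> real" where
  "L1_norm \<Omega> g = integral\<^sup>L (lebesgue_on \<Omega>) (\<lambda>x. \<bar>g x\<bar>)"

definition L2_norm :: "(real^'n) set \<Rightarrow> 'n fn \<Rightarrow> real" where
  "L2_norm \<Omega> g = sqrt (integral\<^sup>L (lebesgue_on \<Omega>) (\<lambda>x. (g x)\<^sup>2))"

definition Linf_norm :: "(real^'n) set \<Rightarrow> 'n fn \<Rightarrow> ereal" where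
  "Linf_norm \<Omega> g = esssup (lebesgue_on \<Omega>) (\<lambda>x. ereal \<bar>g x\<bar>)"

definition in_E :: "(real^'n) set \<Rightarrow> 'n pert \<Rightarrow> bool" where
  "in_E \<Omega> e = (case e of (ey, eJ, ea, eb) \<Rightarrow>
      L2_mem \<Omega> ey \<and> L2_mem \<Omega> eJ \<and> Linf_mem \<Omega> ea \<and> Linf_mem \<Omega> eb)"

definition E_norm :: "(real^'n) set \<Rightarrow> 'n pert \<Rightarrow> real" where
  "E_norm \<Omega> e = (case e of (ey, eJ, ea, eb) \<Rightarrow>
      L2_norm \<Omega> ey + L2_norm \<Omega> eJ + real_of_ereal (Linf_norm \<Omega> ea)
      + real_of_ereal (Linf_norm \<Omega> eb))"

definition pert_diff :: "'n pert \<Rightarrow> 'n pert \<Rightarrow> 'n pert" where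
  "pert_diff e e' = (case e of (ey, eJ, ea, eb) \<Rightarrow> case e' of (ey', eJ', ea', eb') \<Rightarrow>
      (\<lambda>x. ey x - ey' x, \<lambda>x. eJ x - eJ' x, \<lambda>x. ea x - ea' x, \<lambda>x. eb x - eb' x))"

definition e_y :: "'n pert \<Rightarrow> 'n fn" where "e_y e = fst e"
definition e_J :: "'n pert \<Rightarrow> 'n fn" where "e_J e = fst (snd e)"
definition e_alpha :: "'n pert \<Rightarrow> 'n fn" where "e_alpha e = fst (snd (snd e))"
definition e_beta :: "'n pert \<Rightarrow> 'n fn" where "e_beta e = snd (snd (snd e))"

definition Uad :: "(real^'n) set \<Rightarrow> 'n fn \<Rightarrow> 'n fn \<Rightarrow> 'n pert \<Rightarrow> 'n fn set" where
  "Uad \<Omega> \<alpha> \<beta> e = {u. integrable (lebesgue_on \<Omega>) u \<and>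
      (AE x in lebesgue_on \<Omega>. \<alpha> x + e_alpha e x \<le> u x \<and> u x \<le> \<beta> x + e_beta e x)}"

text \<open>Derivative J'_u(u,e) v = integral of phi_{u,e} v, phi the adjoint state.\<close>
definition Jprime :: "(real^'n) set \<Rightarrow> 'n fn \<Rightarrow> 'n fn \<Rightarrow> real" where
  "Jprime \<Omega> \<phi> v = integral\<^sup>L (lebesgue_on \<Omega>) (\<lambda>x. \<phi> x * v x)"

definition lipschitz_boundary :: "(real^'n) set \<Rightarrow> bool" where
  "lipschitz_boundary \<Omega> \<longleftrightarrow> (\<forall>x0\<in>frontier \<Omega>. \<exists>r>0. \<exists>\<nu> g C.
      norm \<nu> = 1 \<and> C-lipschitz_on UNIV g \<and>
      \<Omega> \<inter> ball x0 r = {x \<in> ball x0 r. (x - x0) \<bullet> \<nu> < g (x - ((x - x0) \<bullet> \<nu>) *\<^sub>R \<nu>)})"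

definition test_fun :: "(real^'n) set \<Rightarrow> 'n fn \<Rightarrow> (real^'n \<Rightarrow> real^'n) \<Rightarrow> bool" where
  "test_fun \<Omega> v Dv \<longleftrightarrow> (\<forall>x. (v has_derivative (\<lambda>h. Dv x \<bullet> h)) (at x))
      \<and> continuous_on UNIV Dv
      \<and> compact (closure {x. v x \<noteq> 0}) \<and> closure {x. v x \<noteq> 0} \<subseteq> \<Omega>"

definition H10 :: "(real^'n) set \<Rightarrow> 'n fn \<Rightarrow> (real^'n \<Rightarrow> real^'n) \<Rightarrow> bool" where
  "H10 \<Omega> y G \<longleftrightarrow> L2_mem \<Omega> y \<and> G \<in> borel_measurable (lebesgue_on \<Omega>)
      \<and> integrable (lebesgue_on \<Omega>) (\<lambda>x. (norm (G x))\<^sup>2)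
      \<and> (\<exists>\<psi> D\<psi>. (\<forall>k. test_fun \<Omega> (\<psi> k) (D\<psi> k))
          \<and> (\<lambda>k. integral\<^sup>L (lebesgue_on \<Omega>) (\<lambda>x. (\<psi> k x - y x)\<^sup>2)) \<longlonglongrightarrow> 0
          \<and> (\<lambda>k. integral\<^sup>L (lebesgue_on \<Omega>) (\<lambda>x. (norm (D\<psi> k x - G x))\<^sup>2)) \<longlonglongrightarrow> 0)"

text \<open>Weak solution y in H^1_0 \<inter> L^\<infinity> of  A y + f(x,y) = u,  y = 0 on the boundary,
  A y = - sum_{i,j} d_j (a_ij d_i y).\<close>
definition state_sol :: "(real^'n) set \<Rightarrow> ('n \<Rightarrow> 'n \<Rightarrow> 'n fn) \<Rightarrow> (real^'n \<Rightarrow> real \<Rightarrow> real)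
    \<Rightarrow> 'n fn \<Rightarrow> 'n fn \<Rightarrow> bool" where
  "state_sol \<Omega> a f u y \<longleftrightarrow> Linf_mem \<Omega> y \<and> (\<exists>G. H10 \<Omega> y G \<and>
      (\<forall>v Dv. test_fun \<Omega> v Dv \<longrightarrow>
         integrable (lebesgue_on \<Omega>)
           (\<lambda>x. (\<Sum>i\<in>UNIV. \<Sum>j\<in>UNIV. a i j x * (G x $ i) * (Dv x $ j)) + f x (y x) * v x)
       \<and> integral\<^sup>L (lebesgue_on \<Omega>)
           (\<lambda>x. (\<Sum>i\<in>UNIV. \<Sum>j\<in>UNIV. a i j x * (G x $ i) * (Dv x $ j)) + f x (y x) * v x)
         = integral\<^sup>L (lebesgue_on \<Omega>) (\<lambda>x. u x * v x)))"

text \<open>Weak solution phi in H^1_0 of  A^* phi + fy(x,y) phi = Ly(x,y) + eJ,  phi = 0 on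
  the boundary.\<close>
definition adjoint_sol :: "(real^'n) set \<Rightarrow> ('n \<Rightarrow> 'n \<Rightarrow> 'n fn) \<Rightarrow> (real^'n \<Rightarrow> real \<Rightarrow> real)
    \<Rightarrow> (real^'n \<Rightarrow> real \<Rightarrow> real) \<Rightarrow> 'n fn \<Rightarrow> 'n fn \<Rightarrow> 'n fn \<Rightarrow> bool" where
  "adjoint_sol \<Omega> a fy Ly y eJ \<phi> \<longleftrightarrow> (\<exists>G. H10 \<Omega> \<phi> G \<and>
      (\<forall>v Dv. test_fun \<Omega> v Dv \<longrightarrow>
         integrable (lebesgue_on \<Omega>)
           (\<lambda>x. (\<Sum>i\<in>UNIV. \<Sum>j\<in>UNIV. a i j x * (Dv x $ i) * (G x $ j)) + fy x (y x) * \<phi> x * v x)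
       \<and> integrable (lebesgue_on \<Omega>) (\<lambda>x. (Ly x (y x) + eJ x) * v x)
       \<and> integral\<^sup>L (lebesgue_on \<Omega>)
           (\<lambda>x. (\<Sum>i\<in>UNIV. \<Sum>j\<in>UNIV. a i j x * (Dv x $ i) * (G x $ j)) + fy x (y x) * \<phi> x * v x)
         = integral\<^sup>L (lebesgue_on \<Omega>) (\<lambda>x. (Ly x (y x) + eJ x) * v x)))"

definition C2_caratheodory :: "(real^'n) set \<Rightarrow> (real^'n \<Rightarrow> real \<Rightarrow> real)
    \<Rightarrow> (real^'n \<Rightarrow> real \<Rightarrow> real) \<Rightarrow> (real^'n \<Rightarrow> real \<Rightarrow> real) \<Rightarrow> bool" where
  "C2_caratheodory \<Omega> F F1 F2 \<longleftrightarrow>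
      (\<forall>y. (\<lambda>x. F x y) \<in> borel_measurable (lebesgue_on \<Omega>))
    \<and> (AE x in lebesgue_on \<Omega>. \<forall>y. (F x has_real_derivative F1 x y) (at y)
                                   \<and> (F1 x has_real_derivative F2 x y) (at y)
                                   \<and> isCont (F2 x) y)
    \<and> (\<forall>M>0. \<forall>\<epsilon>>0. \<exists>\<delta>>0. AE x in lebesgue_on \<Omega>. \<forall>y1 y2.
          \<bar>y1\<bar> \<le> M \<longrightarrow> \<bar>y2\<bar> \<le> M \<longrightarrow> \<bar>y1 - y2\<bar> < \<delta> \<longrightarrow> \<bar>F2 x y1 - F2 x y2\<bar> < \<epsilon>)"

end

theory Submission
  imports Defs
begin

lemma int_mult_bdd:
  fixes f g :: "'a \<Rightarrow> real"
  assumes "integrable M f" "g \<in> borel_measurable M" "AE x in M. \<bar>g x\<bar> \<le> C"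
  shows "integrable M (\<lambda>x. f x * g x)"
proof (rule Bochner_Integration.integrable_bound[where f="\<lambda>x. \<bar>C\<bar> * f x"])
  show "integrable M (\<lambda>x. \<bar>C\<bar> * f x)" using assms(1) by simp
  show "(\<lambda>x. f x * g x) \<in> borel_measurable M" using assms(1,2) by measurable
  show "AE x in M. norm (f x * g x) \<le> norm (\<bar>C\<bar> * f x)"
    using assms(3) by eventually_elim (simp add: abs_mult, metis abs_ge_zero mult.commute mult_left_mono)
qed

lemma int_bdd:
  fixes g :: "'a \<Rightarrow> real"
  assumes "finite_measure M" "g \<in> borel_measurable M" "AE x in M. \<bar>g x\<bar> \<le> C"
  shows "integrable M g"
  using finite_measure.integrable_const_bound[OF assms(1), of g C] assms(2,3) by auto

lemma L2_int:
  fixes f :: "'a \<Rightarrow> real"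
  assumes "finite_measure M" "f \<in> borel_measurable M" "integrable M (\<lambda>x. (f x)\<^sup>2)"
  shows "integrable M f"
proof (rule Bochner_Integration.integrable_bound[where f="\<lambda>x. 1 + (f x)\<^sup>2"])
  show "integrable M (\<lambda>x. 1 + (f x)\<^sup>2)"
    using assms finite_measure.integrable_const[OF assms(1)] by (intro Bochner_Integration.integrable_add) auto
  show "f \<in> borel_measurable M" by fact
  have "\<bar>f x\<bar> \<le> 1 + (f x)\<^sup>2" for x
  proof -
    have "0 \<le> (\<bar>f x\<bar> - 1)\<^sup>2" by simp
    also have "\<dots> = (f x)\<^sup>2 - 2 * \<bar>f x\<bar> + 1" by (simp add: power2_eq_square algebra_simps)
    finally show ?thesis by simp
  qed
  then show "AE x in M. norm (f x) \<le> norm (1 + (f x)\<^sup>2)" by auto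
qed

lemma esssup_nonneg:
  fixes g :: "'a \<Rightarrow> real"
  assumes "emeasure M (space M) \<noteq> 0"
  shows "0 \<le> esssup M (\<lambda>x. ereal \<bar>g x\<bar>)"
proof (cases "(\<lambda>x. ereal \<bar>g x\<bar>) \<in> borel_measurable M")
  case True
  have "esssup M (\<lambda>x. ereal 0) \<le> esssup M (\<lambda>x. ereal \<bar>g x\<bar>)"
    by (rule esssup_mono) auto
  moreover have "esssup M (\<lambda>x. ereal 0) = ereal 0" by (rule esssup_const[OF assms])
  ultimately show ?thesis by (simp add: zero_ereal_def)
next
  case False then show ?thesis by (simp add: esssup_non_measurable)
qed

lemma linf_facts:
  fixes g :: "'a \<Rightarrow> real"
  assumes "emeasure M (space M) \<noteq> 0" "g \<in> borel_measurable M" "AE x in M. \<bar>g x\<bar> \<le> C"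
  shows "esssup M (\<lambda>x. ereal \<bar>g x\<bar>) = ereal (real_of_ereal (esssup M (\<lambda>x. ereal \<bar>g x\<bar>)))"
    "0 \<le> real_of_ereal (esssup M (\<lambda>x. ereal \<bar>g x\<bar>))"
    "AE x in M. \<bar>g x\<bar> \<le> real_of_ereal (esssup M (\<lambda>x. ereal \<bar>g x\<bar>))"
proof -
  have le: "esssup M (\<lambda>x. ereal \<bar>g x\<bar>) \<le> ereal C"
    using assms(2,3) by (intro esssup_I) auto
  have ge: "0 \<le> esssup M (\<lambda>x. ereal \<bar>g x\<bar>)" using esssup_nonneg[OF assms(1)] .
  show eq: "esssup M (\<lambda>x. ereal \<bar>g x\<bar>) = ereal (real_of_ereal (esssup M (\<lambda>x. ereal \<bar>g x\<bar>)))"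
    using le ge by (cases "esssup M (\<lambda>x. ereal \<bar>g x\<bar>)") auto
  show "0 \<le> real_of_ereal (esssup M (\<lambda>x. ereal \<bar>g x\<bar>))" using ge by (simp add: real_of_ereal_pos)
  show "AE x in M. \<bar>g x\<bar> \<le> real_of_ereal (esssup M (\<lambda>x. ereal \<bar>g x\<bar>))"
  proof -
    have "AE x in M. ereal \<bar>g x\<bar> \<le> ereal (real_of_ereal (esssup M (\<lambda>x. ereal \<bar>g x\<bar>)))"
      using esssup_AE[of "\<lambda>x. ereal \<bar>g x\<bar>" M] eq by metis
    then show ?thesis by eventually_elim simp
  qed
qed

lemma P1:
  fixes a b a' b' u w D \<phi> \<psi> :: real
  assumes "a \<le> u" "u \<le> b" "a' \<le> w" "w \<le> b'" "\<bar>a - a'\<bar> \<le> D" "\<bar>b - b'\<bar> \<le> D" "2*D < b - a" "0 \<le> D"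
   "\<phi> > 0 \<Longrightarrow> u = a" "\<phi> < 0 \<Longrightarrow> u = b" "\<psi> > 0 \<Longrightarrow> w = a'" "\<psi> < 0 \<Longrightarrow> w = b'"
  shows "(\<psi> - \<phi>) * (u - w) \<ge> \<bar>\<phi>\<bar> * max 0 (\<bar>u - w\<bar> - D) - \<bar>\<psi> - \<phi>\<bar> * D"
proof -
  have aux: "\<bar>\<phi>\<bar> * max 0 (\<bar>u - w\<bar> - D) \<le> \<bar>\<phi>\<bar> * \<bar>u - w\<bar>"
    using assms(8) by (intro mult_left_mono) auto
  have nn: "\<bar>\<psi> - \<phi>\<bar> * D \<ge> 0" using assms(8) by simp
  have low: "(\<psi> - \<phi>) * (u - w) \<ge> - \<bar>\<psi> - \<phi>\<bar> * D" if "\<bar>u - w\<bar> \<le> D"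
  proof -
    have "\<bar>(\<psi> - \<phi>) * (u - w)\<bar> \<le> \<bar>\<psi> - \<phi>\<bar> * D" unfolding abs_mult
      using that by (intro mult_left_mono) auto
    then show ?thesis by linarith
  qed
  consider "\<phi> > 0" | "\<phi> < 0" | "\<phi> = 0" by linarith
  then show ?thesis
  proof cases
    case 1
    then have u: "u = a" using assms by auto
    consider "\<psi> > 0" | "\<psi> < 0" | "\<psi> = 0" by linarith
    then show ?thesis
    proof cases
      case 1
      then have "w = a'" using assms by auto
      then have uw: "\<bar>u - w\<bar> \<le> D" using u assms by auto
      then show ?thesis using low[OF uw] by simp
    next
      case 2
      then have "w = b'" using assms by auto
      then have "u - w < 0" using u assms by auto
      then have "(\<psi> - \<phi>) * (u - w) = (\<phi> - \<psi>) * \<bar>u - w\<bar>" by (simp add: algebra_simps)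
      also have "\<dots> \<ge> \<phi> * \<bar>u - w\<bar>" using 2 by (intro mult_right_mono) auto
      finally have "\<bar>\<phi>\<bar> * \<bar>u - w\<bar> \<le> (\<psi> - \<phi>) * (u - w)" using \<open>\<phi> > 0\<close> by simp
      then show ?thesis using aux nn by linarith
    next
      case 3
      show ?thesis
      proof (cases "w \<ge> a")
        case True
        then have "(\<psi> - \<phi>) * (u - w) = \<phi> * \<bar>u - w\<bar>" using u 3 by (simp add: algebra_simps)
        then have "\<bar>\<phi>\<bar> * \<bar>u - w\<bar> \<le> (\<psi> - \<phi>) * (u - w)" using \<open>\<phi> > 0\<close> by simp
        then show ?thesis using aux nn by linarith
      next
        case False
        then have uw: "\<bar>u - w\<bar> \<le> D" using u assms by auto
        then show ?thesis using low[OF uw] by simp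
      qed
    qed
  next
    case 2
    then have u: "u = b" using assms by auto
    consider "\<psi> > 0" | "\<psi> < 0" | "\<psi> = 0" by linarith
    then show ?thesis
    proof cases
      case 2
      then have "w = b'" using assms by auto
      then have uw: "\<bar>u - w\<bar> \<le> D" using u assms by auto
      then show ?thesis using low[OF uw] by simp
    next
      case 1
      then have "w = a'" using assms by auto
      then have "u - w > 0" using u assms by auto
      then have "(\<psi> - \<phi>) * (u - w) = (\<psi> - \<phi>) * \<bar>u - w\<bar>" by simp
      also have "\<dots> \<ge> (- \<phi>) * \<bar>u - w\<bar>" using 1 by (intro mult_right_mono) auto
      finally have "\<bar>\<phi>\<bar> * \<bar>u - w\<bar> \<le> (\<psi> - \<phi>) * (u - w)" using \<open>\<phi> < 0\<close> by simp
      then show ?thesis using aux nn by linarith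
    next
      case 3
      show ?thesis
      proof (cases "w \<le> b")
        case True
        then have "(\<psi> - \<phi>) * (u - w) = (- \<phi>) * \<bar>u - w\<bar>" using u 3 by (simp add: algebra_simps)
        then have "\<bar>\<phi>\<bar> * \<bar>u - w\<bar> \<le> (\<psi> - \<phi>) * (u - w)" using \<open>\<phi> < 0\<close> by simp
        then show ?thesis using aux nn by linarith
      next
        case False
        then have uw: "\<bar>u - w\<bar> \<le> D" using u assms by auto
        then show ?thesis using low[OF uw] by simp
      qed
    qed
  next
    case 3
    have "\<psi> * (u - w) \<ge> - \<bar>\<psi>\<bar> * D"
    proof -
      consider "\<psi> > 0" | "\<psi> < 0" | "\<psi> = 0" by linarith
      then show ?thesis
      proof cases
        case 1
        then have "u - w \<ge> -D" using assms by auto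
        then have "\<psi> * (u - w) \<ge> \<psi> * (-D)" using 1 by (intro mult_left_mono) auto
        then show ?thesis using 1 by simp
      next
        case 2
        then have "u - w \<le> D" using assms by auto
        then have "\<psi> * (u - w) \<ge> \<psi> * D" using 2 by (intro mult_left_mono_neg) auto
        then show ?thesis using 2 by simp
      qed simp
    qed
    then show ?thesis using 3 by simp
  qed
qed
lemma foc_pw:
  fixes \<phi> a b u0 :: "'a \<Rightarrow> real"
  assumes fm: "finite_measure M"
    and phi: "integrable M \<phi>" and am: "a \<in> borel_measurable M" and bm: "b \<in> borel_measurable M"
    and um: "u0 \<in> borel_measurable M"
    and ab: "AE x in M. \<bar>a x\<bar> \<le> Ca" "AE x in M. \<bar>b x\<bar> \<le> Cb"
    and u0: "AE x in M. a x \<le> u0 x \<and> u0 x \<le> b x"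
    and foc: "\<And>u. integrable M u \<Longrightarrow> (AE x in M. a x \<le> u x \<and> u x \<le> b x) \<Longrightarrow>
                 integral\<^sup>L M (\<lambda>x. \<phi> x * (u x - u0 x)) \<ge> 0"
  shows "AE x in M. (\<phi> x > 0 \<longrightarrow> u0 x = a x) \<and> (\<phi> x < 0 \<longrightarrow> u0 x = b x)"
proof -
  define v where "v = (\<lambda>x. if \<phi> x > 0 then a x else if \<phi> x < 0 then b x else u0 x)"
  have phim: "\<phi> \<in> borel_measurable M" using phi by auto
  have vm: "v \<in> borel_measurable M" unfolding v_def using phim am bm um by measurable
  have vb: "AE x in M. \<bar>v x\<bar> \<le> Ca + Cb"
    using ab u0 by eventually_elim (auto simp: v_def)
  have vi: "integrable M v" using int_bdd[OF fm vm vb] .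
  have vab: "AE x in M. a x \<le> v x \<and> v x \<le> b x"
    using u0 by eventually_elim (auto simp: v_def)
  have I: "integral\<^sup>L M (\<lambda>x. \<phi> x * (v x - u0 x)) \<ge> 0" using foc[OF vi vab] .
  have db: "AE x in M. \<bar>v x - u0 x\<bar> \<le> 2 * (Ca + Cb)"
    using ab u0 by eventually_elim (auto simp: v_def)
  have gi: "integrable M (\<lambda>x. \<phi> x * (v x - u0 x))"
    using int_mult_bdd[OF phi _ db] vm um by auto
  have gn: "AE x in M. 0 \<le> - (\<phi> x * (v x - u0 x))"
    using u0 
  proof eventually_elim
    case (elim x)
    show ?case
    proof (cases "\<phi> x > 0")
      case True
      then show ?thesis using elim by (auto simp: v_def mult_nonneg_nonpos)
    next
      case False
      then show ?thesis using elim by (auto simp: v_def mult_nonpos_nonneg)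
    qed
  qed
  have "integral\<^sup>L M (\<lambda>x. - (\<phi> x * (v x - u0 x))) \<ge> 0"
    using gn by (rule integral_nonneg_AE)
  then have "integral\<^sup>L M (\<lambda>x. - (\<phi> x * (v x - u0 x))) = 0" using I by simp
  then have "AE x in M. - (\<phi> x * (v x - u0 x)) = 0"
    using integral_nonneg_eq_0_iff_AE[of M "\<lambda>x. - (\<phi> x * (v x - u0 x))"] gi gn by auto
  then show ?thesis by eventually_elim (auto simp: v_def)
qed
lemma growth_step:
  fixes \<phi> t :: "'a \<Rightarrow> real"
  assumes fm: "finite_measure M" and phi: "integrable M \<phi>" and tm: "t \<in> borel_measurable M"
    and tb: "AE x in M. \<bar>t x\<bar> \<le> T" and T: "T > 0" and K: "K > 0" and kap: "\<kappa> > 0" and D: "D \<ge> 0"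
    and gr: "\<And>\<epsilon>. \<epsilon> > 0 \<Longrightarrow> measure M {x\<in>space M. \<bar>\<phi> x\<bar> \<le> \<epsilon>} \<le> K * \<epsilon> powr \<kappa>"
  shows "1/2 * integral\<^sup>L M (\<lambda>x. \<bar>\<phi> x\<bar> * max 0 (\<bar>t x\<bar> - D)) \<ge>
     ((1/(2*T*K)) powr (1/\<kappa>) / 8) * (integral\<^sup>L M (\<lambda>x. \<bar>t x\<bar>)) powr (1 + 1/\<kappa>)
     - ((1/(2*T*K)) powr (1/\<kappa>) / 8) * (4 * measure M (space M)) powr (1 + 1/\<kappa>) * D powr (1/\<kappa>) * D"
proof -
  define \<mu> where "\<mu> = measure M (space M)"
  define L1 where "L1 = integral\<^sup>L M (\<lambda>x. \<bar>t x\<bar>)"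
  define kp where "kp = (1/(2*T*K)) powr (1/\<kappa>) / 8"
  define G where "G = integral\<^sup>L M (\<lambda>x. \<bar>\<phi> x\<bar> * max 0 (\<bar>t x\<bar> - D))"
  have mu0: "\<mu> \<ge> 0" unfolding \<mu>_def by simp
  have L10: "L1 \<ge> 0" unfolding L1_def by simp
  have kp0: "kp > 0" unfolding kp_def using T K by simp
  have G0: "G \<ge> 0" unfolding G_def by (intro integral_nonneg_AE) auto
  have tabs: "integrable M (\<lambda>x. \<bar>t x\<bar>)"
    using int_bdd[OF fm _ tb] tm by auto
  have mb: "(\<lambda>x. max 0 (\<bar>t x\<bar> - D)) \<in> borel_measurable M" using tm by measurable
  have mbb: "AE x in M. \<bar>max 0 (\<bar>t x\<bar> - D)\<bar> \<le> T" using tb by eventually_elim (use D in auto)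
  have gi: "integrable M (\<lambda>x. \<bar>\<phi> x\<bar> * max 0 (\<bar>t x\<bar> - D))"
    using int_mult_bdd[OF _ mb mbb, of "\<lambda>x. \<bar>\<phi> x\<bar>"] phi by auto
  have pw: "kp * L1 powr (1 + 1/\<kappa>) \<le> 1/2 * G + kp * (4 * \<mu>) powr (1 + 1/\<kappa>) * D powr (1/\<kappa>) * D"
  proof (cases "L1 \<le> 4 * \<mu> * D")
    case True
    have "L1 powr (1 + 1/\<kappa>) \<le> (4 * \<mu> * D) powr (1 + 1/\<kappa>)"
      using True L10 kap by (intro powr_mono2) auto
    also have "\<dots> = (4 * \<mu>) powr (1 + 1/\<kappa>) * D powr (1/\<kappa>) * D"
      using mu0 D by (simp add: powr_mult powr_add powr_one)
    finally have "kp * L1 powr (1 + 1/\<kappa>) \<le> kp * ((4 * \<mu>) powr (1 + 1/\<kappa>) * D powr (1/\<kappa>) * D)"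
      using kp0 by (intro mult_left_mono) auto
    then show ?thesis using G0 by (simp add: mult.assoc)
  next
    case False
    then have L1p: "L1 > 0" using mu0 D by (smt (verit) mult_nonneg_nonneg)
    define \<epsilon> where "\<epsilon> = (L1 / (2*T*K)) powr (1/\<kappa>)"
    have ep: "\<epsilon> > 0" unfolding \<epsilon>_def using L1p T K by simp
    have epk: "\<epsilon> powr \<kappa> = L1 / (2*T*K)"
      unfolding \<epsilon>_def using kap L1p T K by (simp add: powr_powr)
    define S where "S = {x\<in>space M. \<bar>\<phi> x\<bar> \<le> \<epsilon>}"
    have phim: "\<phi> \<in> borel_measurable M" using phi by auto
    have Ss: "S \<in> sets M" unfolding S_def using phim by measurable
    have Si: "integrable M (indicator S :: 'a \<Rightarrow> real)"
      using Ss finite_measure.emeasure_finite[OF fm, of S] by (auto simp: top.not_eq_extremum)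
    have Sm: "measure M S \<le> K * \<epsilon> powr \<kappa>" unfolding S_def using gr[OF ep] .
    have pwi: "AE x in M. \<epsilon> * \<bar>t x\<bar> - \<epsilon> * D - \<epsilon> * T * indicator S x \<le> \<bar>\<phi> x\<bar> * max 0 (\<bar>t x\<bar> - D)"
      using tb AE_space
    proof eventually_elim
      case (elim x)
      show ?case
      proof (cases "\<bar>\<phi> x\<bar> \<le> \<epsilon>")
        case True
        then have "\<epsilon> * T * indicator S x = \<epsilon> * T" using elim unfolding S_def by auto
        moreover have "\<epsilon> * \<bar>t x\<bar> \<le> \<epsilon> * T" using elim ep by (intro mult_left_mono) auto
        moreover have "\<epsilon> * D \<ge> 0" using ep D by simp
        moreover have "\<bar>\<phi> x\<bar> * max 0 (\<bar>t x\<bar> - D) \<ge> 0" by simp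
        ultimately show ?thesis by linarith
      next
        case False
        have "\<epsilon> * (\<bar>t x\<bar> - D) \<le> \<epsilon> * max 0 (\<bar>t x\<bar> - D)" using ep by (intro mult_left_mono) auto
        also have "\<dots> \<le> \<bar>\<phi> x\<bar> * max 0 (\<bar>t x\<bar> - D)" using False by (intro mult_right_mono) auto
        finally have "\<epsilon> * \<bar>t x\<bar> - \<epsilon> * D \<le> \<bar>\<phi> x\<bar> * max 0 (\<bar>t x\<bar> - D)" by (simp add: algebra_simps)
        moreover have "\<epsilon> * T * indicator S x \<ge> 0" using ep T by simp
        ultimately show ?thesis by linarith
      qed
    qed
    have "integral\<^sup>L M (\<lambda>x. \<epsilon> * \<bar>t x\<bar> - \<epsilon> * D - \<epsilon> * T * indicator S x) \<le> G"
      unfolding G_def using pwi gi tabs Si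
      by (intro integral_mono_AE) (auto intro!: Bochner_Integration.integrable_diff finite_measure.integrable_const[OF fm])
    moreover have "integral\<^sup>L M (\<lambda>x. \<epsilon> * \<bar>t x\<bar> - \<epsilon> * D - \<epsilon> * T * indicator S x)
        = \<epsilon> * L1 - \<epsilon> * D * \<mu> - \<epsilon> * T * measure M S"
    proof -
      have i1: "integrable M (\<lambda>x. \<epsilon> * \<bar>t x\<bar>)" using tabs by simp
      have i2: "integrable M (\<lambda>x. \<epsilon> * D)" using finite_measure.integrable_const[OF fm] by blast
      have i3: "integrable M (\<lambda>x. \<epsilon> * T * indicator S x)" using Si by simp
      have "integral\<^sup>L M (\<lambda>x. \<epsilon> * \<bar>t x\<bar> - \<epsilon> * D - \<epsilon> * T * indicator S x)
          = integral\<^sup>L M (\<lambda>x. \<epsilon> * \<bar>t x\<bar>) - integral\<^sup>L M (\<lambda>x. \<epsilon> * D) - integral\<^sup>L M (\<lambda>x. \<epsilon> * T * indicator S x)"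
        using i1 i2 i3 by (simp add: Bochner_Integration.integral_diff)
      also have "\<dots> = \<epsilon> * L1 - \<epsilon> * D * \<mu> - \<epsilon> * T * measure M S"
        using Ss unfolding L1_def \<mu>_def by (simp add: Int_absorb2 sets.sets_into_space)
      finally show ?thesis .
    qed
    ultimately have "G \<ge> \<epsilon> * L1 - \<epsilon> * D * \<mu> - \<epsilon> * T * measure M S" by simp
    moreover have "\<epsilon> * T * measure M S \<le> \<epsilon> * T * (K * \<epsilon> powr \<kappa>)"
      using Sm ep T by (intro mult_left_mono) auto
    moreover have "\<epsilon> * T * (K * \<epsilon> powr \<kappa>) = \<epsilon> * (L1 / 2)" using epk T K by simp
    moreover have "D * \<mu> \<le> L1 / 4" using False by (simp add: algebra_simps)
    then have "\<epsilon> * D * \<mu> \<le> \<epsilon> * (L1 / 4)"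
      using ep unfolding mult.assoc by (intro mult_left_mono) auto
    ultimately have "G \<ge> \<epsilon> * L1 - \<epsilon> * (L1 / 4) - \<epsilon> * (L1 / 2)" by linarith
    then have "G \<ge> \<epsilon> * L1 / 4" by (simp add: algebra_simps)
    moreover have "\<epsilon> * L1 = 8 * (kp * L1 powr (1 + 1/\<kappa>))"
      proof -
      have Lp: "L1 powr (1 + 1/\<kappa>) = L1 powr (1/\<kappa>) * L1" using L1p by (simp add: powr_add)
      have e1: "(L1 / (2*T*K)) powr (1/\<kappa>) = L1 powr (1/\<kappa>) / (2*T*K) powr (1/\<kappa>)"
        using L1p T K by (simp add: powr_divide)
      have e2: "(1 / (2*T*K)) powr (1/\<kappa>) = 1 / (2*T*K) powr (1/\<kappa>)"
        using L1p T K by (simp add: powr_divide)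
      show ?thesis unfolding \<epsilon>_def kp_def Lp e1 e2 by simp
    qed
    moreover have "kp * (4 * \<mu>) powr (1 + 1/\<kappa>) * D powr (1/\<kappa>) * D \<ge> 0"
      using kp0 D by simp
    ultimately show ?thesis by linarith
  qed
  then show ?thesis unfolding kp_def G_def L1_def \<mu>_def by linarith
qed

lemma P2:
  fixes a u b D w :: real
  assumes "a \<le> u" "u \<le> b" "0 \<le> D"
  shows "\<bar>max (max a (w - D)) (min (min b (w + D)) u) - u\<bar> \<le> max 0 (\<bar>u - w\<bar> - D)"
  using assms by (auto simp: max_def min_def abs_if)

lemma pos_meas: fixes \<Omega> :: "(real^'n) set" assumes "open \<Omega>" "\<Omega> \<noteq> {}"
  shows "emeasure lebesgue \<Omega> > 0"
proof -
  obtain x where "x \<in> \<Omega>" using assms by auto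
  then obtain r where r: "r > 0" "ball x r \<subseteq> \<Omega>" using assms open_contains_ball by blast
  have "measure lborel (ball x r) > 0" using content_ball_pos[OF r(1), of x] by simp
  then have "emeasure lborel (ball x r) > 0"
    using emeasure_lborel_ball_finite[of x r] by (simp add: emeasure_eq_ennreal_measure)
  then have "emeasure lebesgue (ball x r) > 0"
    by (simp add: emeasure_completion)
  also have "\<dots> \<le> emeasure lebesgue \<Omega>"
    using r assms by (intro emeasure_mono) auto
  finally show ?thesis .
qed

lemma clamp_facts:
  fixes a b w D u :: real
  assumes "a \<le> b" "a \<le> w + D" "w \<le> b + D" "0 \<le> D"
  shows "a \<le> max (max a (w - D)) (min (min b (w + D)) u) \<and> max (max a (w - D)) (min (min b (w + D)) u) \<le> b
     \<and> \<bar>w - max (max a (w - D)) (min (min b (w + D)) u)\<bar> \<le> D"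
  using assms by (auto simp: max_def min_def)

lemma pw_all:
  fixes la ub lb la' w lb' D phb phe s A B T \<eta> v :: real
  assumes H: "la \<le> ub \<and> ub \<le> lb \<and> la' \<le> w \<and> w \<le> lb'
        \<and> \<bar>la - la'\<bar> \<le> D \<and> \<bar>lb - lb'\<bar> \<le> D \<and> s \<le> lb - la
        \<and> (phb > 0 \<longrightarrow> ub = la) \<and> (phb < 0 \<longrightarrow> ub = lb)
        \<and> (phe > 0 \<longrightarrow> w = la') \<and> (phe < 0 \<longrightarrow> w = lb')
        \<and> \<bar>la\<bar> \<le> A \<and> \<bar>lb\<bar> \<le> B"
    and D0: "0 \<le> D" and s2: "2 * D < s" and De: "D \<le> \<eta>" and TT: "A + B + \<eta> \<le> T"
    and v: "v = max (max la (w - D)) (min (min lb (w + D)) ub)"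
  shows "la \<le> v \<and> v \<le> lb \<and> \<bar>w - v\<bar> \<le> D
       \<and> (phe - phb) * (ub - w) \<ge> \<bar>phb\<bar> * max 0 (\<bar>ub - w\<bar> - D) - \<bar>phe - phb\<bar> * D
       \<and> phb * (v - ub) \<le> \<bar>phb\<bar> * max 0 (\<bar>ub - w\<bar> - D)
       \<and> \<bar>ub - w\<bar> \<le> T \<and> \<bar>v - ub\<bar> \<le> T"
proof -
  have h1: "la \<le> ub" "ub \<le> lb" "la' \<le> w" "w \<le> lb'" using H by blast+
  have h2: "\<bar>la - la'\<bar> \<le> D" "\<bar>lb - lb'\<bar> \<le> D" "s \<le> lb - la" using H by blast+
  have h3: "phb > 0 \<Longrightarrow> ub = la" "phb < 0 \<Longrightarrow> ub = lb" "phe > 0 \<Longrightarrow> w = la'" "phe < 0 \<Longrightarrow> w = lb'"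
    using H by blast+
  have h4: "\<bar>la\<bar> \<le> A" "\<bar>lb\<bar> \<le> B" using H by blast+
  have a1: "la - la' \<le> D" "la' - la \<le> D" "lb - lb' \<le> D" "lb' - lb \<le> D" using h2 by (simp_all add: abs_le_iff)
  have a2: "la \<le> A" "-la \<le> A" "lb \<le> B" "-lb \<le> B" using h4 by (simp_all add: abs_le_iff)
  have c: "la \<le> lb" "la \<le> w + D" "w \<le> lb + D" using h1 h2 a1 s2 D0 by linarith+
  note cl = clamp_facts[OF c D0, of ub]
  have p1: "(phe - phb) * (ub - w) \<ge> \<bar>phb\<bar> * max 0 (\<bar>ub - w\<bar> - D) - \<bar>phe - phb\<bar> * D"
    by (rule P1[of la ub lb la' w lb' D]) (use h1 h2 h3 s2 D0 in auto)
  have p2a: "\<bar>v - ub\<bar> \<le> max 0 (\<bar>ub - w\<bar> - D)"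
    unfolding v using P2[of la ub lb D w] h1 D0 by auto
  have "phb * (v - ub) \<le> \<bar>phb\<bar> * \<bar>v - ub\<bar>"
    by (metis abs_ge_self abs_mult)
  also have "\<dots> \<le> \<bar>phb\<bar> * max 0 (\<bar>ub - w\<bar> - D)" using p2a by (intro mult_left_mono) auto
  finally have p2: "phb * (v - ub) \<le> \<bar>phb\<bar> * max 0 (\<bar>ub - w\<bar> - D)" .
  have t1: "\<bar>ub - w\<bar> \<le> T" unfolding abs_le_iff using h1 a1 a2 TT De by linarith
  have t2: "\<bar>v - ub\<bar> \<le> T" unfolding abs_le_iff using cl h1 a2 TT De D0 unfolding v by linarith
  show ?thesis using cl p1 p2 t1 t2 unfolding v by blast
qed

theorem lemma4p13:
  fixes \<Omega> :: "(real^'n) set"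
    and a :: "'n \<Rightarrow> 'n \<Rightarrow> 'n fn"
    and f fy fyy L Ly Lyy :: "real^'n \<Rightarrow> real \<Rightarrow> real"
    and pbar :: real
    and \<alpha> \<beta> :: "'n fn"
    and ebar :: "'n pert"
    and ubar ybar phibar :: "'n fn"
    and K varkappa \<sigma> \<eta> :: real
  assumes dim: "CARD('n) \<in> {1, 2, 3}"
    and dom: "open \<Omega>" "bounded \<Omega>" "connected \<Omega>" "\<Omega> \<noteq> {}" "lipschitz_boundary \<Omega>"
    and ab: "Linf_mem \<Omega> \<alpha>" "Linf_mem \<Omega> \<beta>" "AE x in lebesgue_on \<Omega>. \<alpha> x \<le> \<beta> x"
    and a_cont: "\<forall>i j. continuous_on (closure \<Omega>) (a i j)"
    and a_ell: "\<exists>\<Lambda>>0. \<forall>x\<in>closure \<Omega>. \<forall>\<xi>::real^'n.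
                   (\<Sum>i\<in>UNIV. \<Sum>j\<in>UNIV. a i j x * \<xi> $ i * \<xi> $ j) \<ge> \<Lambda> * (norm \<xi>)\<^sup>2"
    and pbar: "pbar > real CARD('n) / 2"
    \<comment> \<open>(A1)\<close>
    and A1_car: "C2_caratheodory \<Omega> f fy fyy"
    and A1_0: "Lp_mem \<Omega> pbar (\<lambda>x. f x 0)"
    and A1_mono: "AE x in lebesgue_on \<Omega>. \<forall>y. fy x y \<ge> 0"
    and A1_bd: "\<forall>M>0. \<exists>C. AE x in lebesgue_on \<Omega>. \<forall>y. \<bar>y\<bar> \<le> M \<longrightarrow> \<bar>fy x y\<bar> + \<bar>fyy x y\<bar> \<le> C"
    \<comment> \<open>(A2)\<close>
    and A2_car: "C2_caratheodory \<Omega> L Ly Lyy"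
    and A2_0: "integrable (lebesgue_on \<Omega>) (\<lambda>x. L x 0)"
    and A2_bd1: "\<forall>M>0. \<exists>\<psi>. Lp_mem \<Omega> pbar \<psi> \<and>
                   (AE x in lebesgue_on \<Omega>. \<forall>y. \<bar>y\<bar> \<le> M \<longrightarrow> \<bar>Ly x y\<bar> \<le> \<psi> x)"
    and A2_bd2: "\<forall>M>0. \<exists>C. AE x in lebesgue_on \<Omega>. \<forall>y. \<bar>y\<bar> \<le> M \<longrightarrow> \<bar>Lyy x y\<bar> \<le> C"
    \<comment> \<open>reference perturbation and (A4) at ubar = \<open>\<bar>u\<^sub>\<bar>e\<close>\<close>
    and ebar: "in_E \<Omega> ebar"
    and ubar: "ubar \<in> Uad \<Omega> \<alpha> \<beta> ebar"
    and ybar: "state_sol \<Omega> a f (\<lambda>x. ubar x + e_y ebar x) ybar"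
    and phibar: "adjoint_sol \<Omega> a fy Ly ybar (e_J ebar) phibar"
    and A4_foc: "\<forall>u\<in>Uad \<Omega> \<alpha> \<beta> ebar. Jprime \<Omega> phibar (\<lambda>x. u x - ubar x) \<ge> 0"
    and A4_K: "K > 0" and A4_kappa: "varkappa > 0"
    and A4_growth: "\<forall>\<epsilon>>0. emeasure lebesgue {x\<in>\<Omega>. \<bar>phibar x\<bar> \<le> \<epsilon>} \<le> ennreal (K * \<epsilon> powr varkappa)"
    and sigma: "\<sigma> > 0"
    and gap: "AE x in lebesgue_on \<Omega>. \<beta> x + e_beta ebar x - (\<alpha> x + e_alpha ebar x) \<ge> \<sigma>"
    and eta: "0 < \<eta>" "\<eta> < \<sigma> / 4"
  shows "\<exists>c>0. \<exists>\<kappa>'>0. \<forall>e ue ye phie.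
      in_E \<Omega> e \<longrightarrow> E_norm \<Omega> (pert_diff e ebar) < \<eta> \<longrightarrow>
      ue \<in> Uad \<Omega> \<alpha> \<beta> e \<longrightarrow>
      state_sol \<Omega> a f (\<lambda>x. ue x + e_y e x) ye \<longrightarrow>
      adjoint_sol \<Omega> a fy Ly ye (e_J e) phie \<longrightarrow>
      (\<forall>u\<in>Uad \<Omega> \<alpha> \<beta> e. Jprime \<Omega> phie (\<lambda>x. u x - ue x) \<ge> 0) \<longrightarrow>
      (\<exists>u_e\<in>Uad \<Omega> \<alpha> \<beta> ebar.
         Linf_norm \<Omega> (\<lambda>x. ue x - u_e x) \<le> ereal (E_norm \<Omega> (pert_diff e ebar)) \<and>
         ereal (Jprime \<Omega> phie (\<lambda>x. ubar x - ue x) - Jprime \<Omega> phibar (\<lambda>x. ubar x - ue x))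
         \<ge> ereal (\<kappa>' * L1_norm \<Omega> (\<lambda>x. ue x - ubar x) powr (1 + 1 / varkappa))
           + ereal (1/2 * Jprime \<Omega> phibar (\<lambda>x. u_e x - ubar x))
           - ereal c * (ereal (E_norm \<Omega> (pert_diff e ebar) powr (1 / varkappa))
                        + Linf_norm \<Omega> (\<lambda>x. phie x - phibar x)
                        + ereal (L1_norm \<Omega> (\<lambda>x. ue x - ubar x)))
                     * ereal (E_norm \<Omega> (pert_diff e ebar)))"
proof -
  let ?M = "lebesgue_on \<Omega>"
  have Oml: "\<Omega> \<in> lmeasurable" using lmeasurable_open dom(1,2) by blast
  have fm: "finite_measure ?M" using finite_measure_lebesgue_on[OF Oml] .
  have Oms: "\<Omega> \<in> sets lebesgue" using Oml by (simp add: fmeasurable_def)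
  have spM: "space ?M = \<Omega>" by simp
  have emM: "emeasure ?M \<Omega> = emeasure lebesgue \<Omega>" using Oms by (simp add: emeasure_restrict_space)
  have posM: "emeasure ?M (space ?M) \<noteq> 0" using emM pos_meas[OF dom(1) dom(4)] spM by simp
  define \<mu> where "\<mu> = measure ?M (space ?M)"
  have mu_pos: "\<mu> > 0"
  proof -
    have "emeasure ?M (space ?M) = ennreal \<mu>"
      unfolding \<mu>_def using finite_measure.emeasure_eq_measure[OF fm] by blast
    then have "\<mu> \<noteq> 0" using posM by auto
    moreover have "\<mu> \<ge> 0" unfolding \<mu>_def by simp
    ultimately show ?thesis by simp
  qed
  obtain eby ebJ eba ebb where ebeq: "ebar = (eby, ebJ, eba, ebb)" by (cases ebar) auto
  have ebE: "Linf_mem \<Omega> eba" "Linf_mem \<Omega> ebb" using ebar unfolding ebeq in_E_def by auto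
  have ea_bar: "e_alpha ebar = eba" "e_beta ebar = ebb" unfolding ebeq e_alpha_def e_beta_def by auto
  obtain Ca where Ca: "AE x in ?M. \<bar>\<alpha> x\<bar> \<le> Ca" using ab(1) unfolding Linf_mem_def by auto
  obtain Cb where Cb: "AE x in ?M. \<bar>\<beta> x\<bar> \<le> Cb" using ab(2) unfolding Linf_mem_def by auto
  obtain Cea where Cea: "AE x in ?M. \<bar>eba x\<bar> \<le> Cea" using ebE(1) unfolding Linf_mem_def by auto
  obtain Ceb where Ceb: "AE x in ?M. \<bar>ebb x\<bar> \<le> Ceb" using ebE(2) unfolding Linf_mem_def by auto
  have alm: "\<alpha> \<in> borel_measurable ?M" using ab(1) unfolding Linf_mem_def by auto
  have bem: "\<beta> \<in> borel_measurable ?M" using ab(2) unfolding Linf_mem_def by auto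
  have ebam: "eba \<in> borel_measurable ?M" using ebE(1) unfolding Linf_mem_def by auto
  have ebbm: "ebb \<in> borel_measurable ?M" using ebE(2) unfolding Linf_mem_def by auto
  define lA where "lA = (\<lambda>x. \<alpha> x + eba x)"
  define lB where "lB = (\<lambda>x. \<beta> x + ebb x)"
  have am: "lA \<in> borel_measurable ?M" unfolding lA_def using alm ebam by measurable
  have bm: "lB \<in> borel_measurable ?M" unfolding lB_def using bem ebbm by measurable
  have a_b: "AE x in ?M. \<bar>lA x\<bar> \<le> \<bar>Ca\<bar> + \<bar>Cea\<bar>" using Ca Cea by eventually_elim (auto simp: lA_def)
  have b_b: "AE x in ?M. \<bar>lB x\<bar> \<le> \<bar>Cb\<bar> + \<bar>Ceb\<bar>" using Cb Ceb by eventually_elim (auto simp: lB_def)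
  have ubI: "integrable ?M ubar" and ubab: "AE x in ?M. lA x \<le> ubar x \<and> ubar x \<le> lB x"
    using ubar unfolding Uad_def lA_def lB_def ea_bar by auto
  have ubm: "ubar \<in> borel_measurable ?M" using ubI by auto
  obtain Gb where "H10 \<Omega> phibar Gb" using phibar unfolding adjoint_sol_def by auto
  then have phibL2: "L2_mem \<Omega> phibar" unfolding H10_def by auto
  have phibm: "phibar \<in> borel_measurable ?M" using phibL2 unfolding L2_mem_def by auto
  have phibI: "integrable ?M phibar" using L2_int[OF fm phibm] phibL2 unfolding L2_mem_def by auto
  have focb: "AE x in ?M. (phibar x > 0 \<longrightarrow> ubar x = lA x) \<and> (phibar x < 0 \<longrightarrow> ubar x = lB x)"
  proof (rule foc_pw[OF fm phibI am bm ubm a_b b_b ubab])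
    fix u assume "integrable ?M u" "AE x in ?M. lA x \<le> u x \<and> u x \<le> lB x"
    then have "u \<in> Uad \<Omega> \<alpha> \<beta> ebar" unfolding Uad_def lA_def lB_def ea_bar by auto
    then show "integral\<^sup>L ?M (\<lambda>x. phibar x * (u x - ubar x)) \<ge> 0"
      using A4_foc unfolding Jprime_def by auto
  qed
  have gapab: "AE x in ?M. \<sigma> \<le> lB x - lA x" using gap unfolding lA_def lB_def ea_bar by simp
  define T where "T = \<bar>Ca\<bar> + \<bar>Cea\<bar> + \<bar>Cb\<bar> + \<bar>Ceb\<bar> + \<eta>"
  have Tpos: "T > 0" unfolding T_def using eta by simp
  define kp where "kp = (1/(2*T*K)) powr (1/varkappa) / 8"
  define c1 where "c1 = kp * (4 * \<mu>) powr (1 + 1/varkappa)"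
  define c where "c = c1 + \<mu> + 1"
  have kppos: "kp > 0" unfolding kp_def using Tpos A4_K by simp
  have c10: "c1 \<ge> 0" unfolding c1_def using kppos by simp
  have cpos: "c > 0" unfolding c_def using c10 mu_pos by simp
  have growth: "measure ?M {x\<in>space ?M. \<bar>phibar x\<bar> \<le> \<epsilon>} \<le> K * \<epsilon> powr varkappa" if ep: "\<epsilon> > 0" for \<epsilon>
  proof -
    have "emeasure ?M {x\<in>space ?M. \<bar>phibar x\<bar> \<le> \<epsilon>} = emeasure lebesgue {x\<in>\<Omega>. \<bar>phibar x\<bar> \<le> \<epsilon>}"
      using Oms by (subst emeasure_restrict_space) auto
    also have "\<dots> \<le> ennreal (K * \<epsilon> powr varkappa)" using A4_growth ep by auto
    finally have "ennreal (measure ?M {x\<in>space ?M. \<bar>phibar x\<bar> \<le> \<epsilon>}) \<le> ennreal (K * \<epsilon> powr varkappa)"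
      using finite_measure.emeasure_eq_measure[OF fm] by metis
    then show ?thesis using A4_K by (simp add: ennreal_le_iff)
  qed
  show ?thesis
  proof (rule exI[of _ c], rule conjI[OF cpos], rule exI[of _ kp], rule conjI[OF kppos], intro allI impI)
    fix e ue ye phie
    assume eE: "in_E \<Omega> e" and eD: "E_norm \<Omega> (pert_diff e ebar) < \<eta>" and ueU: "ue \<in> Uad \<Omega> \<alpha> \<beta> e"
      and phie: "adjoint_sol \<Omega> a fy Ly ye (e_J e) phie"
      and focE: "\<forall>u\<in>Uad \<Omega> \<alpha> \<beta> e. Jprime \<Omega> phie (\<lambda>x. u x - ue x) \<ge> 0"
    obtain ey eJ ea eb where eeq: "e = (ey, eJ, ea, eb)" by (cases e) auto
    have eE': "Linf_mem \<Omega> ea" "Linf_mem \<Omega> eb" using eE unfolding eeq in_E_def by auto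
    have e_ab: "e_alpha e = ea" "e_beta e = eb" unfolding eeq e_alpha_def e_beta_def by auto
    define D where "D = E_norm \<Omega> (pert_diff e ebar)"
    have Dform: "D = L2_norm \<Omega> (\<lambda>x. ey x - eby x) + L2_norm \<Omega> (\<lambda>x. eJ x - ebJ x)
       + real_of_ereal (esssup ?M (\<lambda>x. ereal \<bar>ea x - eba x\<bar>)) + real_of_ereal (esssup ?M (\<lambda>x. ereal \<bar>eb x - ebb x\<bar>))"
      unfolding D_def eeq ebeq pert_diff_def E_norm_def Linf_norm_def by simp
    have L2n: "L2_norm \<Omega> g \<ge> 0" for g
    proof -
      have "0 \<le> integral\<^sup>L ?M (\<lambda>x. (g x)\<^sup>2)" by (intro integral_nonneg_AE) auto
      then show ?thesis unfolding L2_norm_def by simp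
    qed
    obtain Cea' where Cea': "AE x in ?M. \<bar>ea x\<bar> \<le> Cea'" using eE'(1) unfolding Linf_mem_def by auto
    obtain Ceb' where Ceb': "AE x in ?M. \<bar>eb x\<bar> \<le> Ceb'" using eE'(2) unfolding Linf_mem_def by auto
    have eam: "ea \<in> borel_measurable ?M" using eE'(1) unfolding Linf_mem_def by auto
    have ebm: "eb \<in> borel_measurable ?M" using eE'(2) unfolding Linf_mem_def by auto
    have dam: "(\<lambda>x. ea x - eba x) \<in> borel_measurable ?M" using eam ebam by measurable
    have dbm: "(\<lambda>x. eb x - ebb x) \<in> borel_measurable ?M" using ebm ebbm by measurable
    have dab: "AE x in ?M. \<bar>ea x - eba x\<bar> \<le> \<bar>Cea'\<bar> + \<bar>Cea\<bar>" using Cea Cea' by eventually_elim auto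
    have dbb: "AE x in ?M. \<bar>eb x - ebb x\<bar> \<le> \<bar>Ceb'\<bar> + \<bar>Ceb\<bar>" using Ceb Ceb' by eventually_elim auto
    note la = linf_facts[OF posM dam dab]
    note lb = linf_facts[OF posM dbm dbb]
    have D0: "D \<ge> 0" using Dform la(2) lb(2) L2n[of "\<lambda>x. ey x - eby x"] L2n[of "\<lambda>x. eJ x - ebJ x"] by linarith
    have Dlt: "D < \<eta>" using eD unfolding D_def .
    have ra: "real_of_ereal (esssup ?M (\<lambda>x. ereal \<bar>ea x - eba x\<bar>)) \<le> D"
      using Dform lb(2) L2n[of "\<lambda>x. ey x - eby x"] L2n[of "\<lambda>x. eJ x - ebJ x"] by linarith
    have rb: "real_of_ereal (esssup ?M (\<lambda>x. ereal \<bar>eb x - ebb x\<bar>)) \<le> D"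
      using Dform la(2) L2n[of "\<lambda>x. ey x - eby x"] L2n[of "\<lambda>x. eJ x - ebJ x"] by linarith
    have hDa: "AE x in ?M. \<bar>ea x - eba x\<bar> \<le> D"
      using la(3) by eventually_elim (use ra in linarith)
    have hDb: "AE x in ?M. \<bar>eb x - ebb x\<bar> \<le> D"
      using lb(3) by eventually_elim (use rb in linarith)
    define lA' where "lA' = (\<lambda>x. \<alpha> x + ea x)"
    define lB' where "lB' = (\<lambda>x. \<beta> x + eb x)"
    have am': "lA' \<in> borel_measurable ?M" unfolding lA'_def using alm eam by measurable
    have bm': "lB' \<in> borel_measurable ?M" unfolding lB'_def using bem ebm by measurable
    have a_b': "AE x in ?M. \<bar>lA' x\<bar> \<le> \<bar>Ca\<bar> + \<bar>Cea'\<bar>" using Ca Cea' by eventually_elim (auto simp: lA'_def)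
    have b_b': "AE x in ?M. \<bar>lB' x\<bar> \<le> \<bar>Cb\<bar> + \<bar>Ceb'\<bar>" using Cb Ceb' by eventually_elim (auto simp: lB'_def)
    have ueI: "integrable ?M ue" and ueab: "AE x in ?M. lA' x \<le> ue x \<and> ue x \<le> lB' x"
      using ueU unfolding Uad_def lA'_def lB'_def e_ab by auto
    have uem: "ue \<in> borel_measurable ?M" using ueI by auto
    obtain Ge where "H10 \<Omega> phie Ge" using phie unfolding adjoint_sol_def by auto
    then have phieL2: "L2_mem \<Omega> phie" unfolding H10_def by auto
    have phiem: "phie \<in> borel_measurable ?M" using phieL2 unfolding L2_mem_def by auto
    have phieI: "integrable ?M phie" using L2_int[OF fm phiem] phieL2 unfolding L2_mem_def by auto
    have foce: "AE x in ?M. (phie x > 0 \<longrightarrow> ue x = lA' x) \<and> (phie x < 0 \<longrightarrow> ue x = lB' x)"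
    proof (rule foc_pw[OF fm phieI am' bm' uem a_b' b_b' ueab])
      fix u assume "integrable ?M u" "AE x in ?M. lA' x \<le> u x \<and> u x \<le> lB' x"
      then have "u \<in> Uad \<Omega> \<alpha> \<beta> e" unfolding Uad_def lA'_def lB'_def e_ab by auto
      then show "integral\<^sup>L ?M (\<lambda>x. phie x * (u x - ue x)) \<ge> 0"
        using focE unfolding Jprime_def by auto
    qed
    have AEall: "AE x in ?M. lA x \<le> ubar x \<and> ubar x \<le> lB x \<and> lA' x \<le> ue x \<and> ue x \<le> lB' x
        \<and> \<bar>lA x - lA' x\<bar> \<le> D \<and> \<bar>lB x - lB' x\<bar> \<le> D \<and> \<sigma> \<le> lB x - lA x
        \<and> (phibar x > 0 \<longrightarrow> ubar x = lA x) \<and> (phibar x < 0 \<longrightarrow> ubar x = lB x)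
        \<and> (phie x > 0 \<longrightarrow> ue x = lA' x) \<and> (phie x < 0 \<longrightarrow> ue x = lB' x)
        \<and> \<bar>lA x\<bar> \<le> \<bar>Ca\<bar> + \<bar>Cea\<bar> \<and> \<bar>lB x\<bar> \<le> \<bar>Cb\<bar> + \<bar>Ceb\<bar>"
      using ubab ueab hDa hDb gapab focb foce a_b b_b
      by eventually_elim (auto simp: lA_def lA'_def lB_def lB'_def abs_minus_commute)
    define ut where "ut = (\<lambda>x. max (max (lA x) (ue x - D)) (min (min (lB x) (ue x + D)) (ubar x)))"
    have utm: "ut \<in> borel_measurable ?M" unfolding ut_def using am bm uem ubm by measurable
    have AEpw: "AE x in ?M. lA x \<le> ut x \<and> ut x \<le> lB x \<and> \<bar>ue x - ut x\<bar> \<le> D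
       \<and> (phie x - phibar x) * (ubar x - ue x) \<ge> \<bar>phibar x\<bar> * max 0 (\<bar>ubar x - ue x\<bar> - D) - \<bar>phie x - phibar x\<bar> * D
       \<and> phibar x * (ut x - ubar x) \<le> \<bar>phibar x\<bar> * max 0 (\<bar>ubar x - ue x\<bar> - D)
       \<and> \<bar>ubar x - ue x\<bar> \<le> T \<and> \<bar>ut x - ubar x\<bar> \<le> T"
      using AEall
    proof eventually_elim
      case (elim x)
      have s2: "2 * D < \<sigma>" using Dlt eta by simp
      have TT: "\<bar>Ca\<bar> + \<bar>Cea\<bar> + (\<bar>Cb\<bar> + \<bar>Ceb\<bar>) + \<eta> \<le> T" unfolding T_def by simp
      show ?case using pw_all[OF elim D0 s2 less_imp_le[OF Dlt] TT, of "ut x"] unfolding ut_def by simp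
    qed
    have utab: "AE x in ?M. lA x \<le> ut x \<and> ut x \<le> lB x \<and> \<bar>ue x - ut x\<bar> \<le> D"
      using AEpw by eventually_elim simp
    have PW: "AE x in ?M. (phie x - phibar x) * (ubar x - ue x) \<ge> \<bar>phibar x\<bar> * max 0 (\<bar>ubar x - ue x\<bar> - D) - \<bar>phie x - phibar x\<bar> * D
       \<and> phibar x * (ut x - ubar x) \<le> \<bar>phibar x\<bar> * max 0 (\<bar>ubar x - ue x\<bar> - D)
       \<and> \<bar>ubar x - ue x\<bar> \<le> T \<and> \<bar>ut x - ubar x\<bar> \<le> T"
      using AEpw by eventually_elim simp
    have utb: "AE x in ?M. \<bar>ut x\<bar> \<le> \<bar>Ca\<bar> + \<bar>Cea\<bar> + (\<bar>Cb\<bar> + \<bar>Ceb\<bar>)"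
      using utab a_b b_b by eventually_elim (simp add: abs_le_iff; linarith)
    have utI: "integrable ?M ut" using int_bdd[OF fm utm utb] .
    have utU: "ut \<in> Uad \<Omega> \<alpha> \<beta> ebar"
      unfolding Uad_def ea_bar using utI utab by (auto simp: lA_def lB_def elim: eventually_mono)
    have utL: "Linf_norm \<Omega> (\<lambda>x. ue x - ut x) \<le> ereal D"
      unfolding Linf_norm_def
    proof (rule esssup_I)
      show "(\<lambda>x. ereal \<bar>ue x - ut x\<bar>) \<in> borel_measurable ?M" using uem utm by measurable
      show "AE x in ?M. ereal \<bar>ue x - ut x\<bar> \<le> ereal D" using utab by eventually_elim auto
    qed
    have tm: "(\<lambda>x. ubar x - ue x) \<in> borel_measurable ?M" using ubm uem by measurable
    have tb: "AE x in ?M. \<bar>ubar x - ue x\<bar> \<le> T" using PW by eventually_elim auto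
    have tb2: "AE x in ?M. \<bar>ut x - ubar x\<bar> \<le> T" using PW by eventually_elim auto
    have i_e: "integrable ?M (\<lambda>x. phie x * (ubar x - ue x))" using int_mult_bdd[OF phieI tm tb] .
    have i_b: "integrable ?M (\<lambda>x. phibar x * (ubar x - ue x))" using int_mult_bdd[OF phibI tm tb] .
    have i_ut: "integrable ?M (\<lambda>x. phibar x * (ut x - ubar x))"
      using int_mult_bdd[OF phibI _ tb2] utm ubm by auto
    have mxm: "(\<lambda>x. max 0 (\<bar>ubar x - ue x\<bar> - D)) \<in> borel_measurable ?M" using tm by measurable
    have mxb: "AE x in ?M. \<bar>max 0 (\<bar>ubar x - ue x\<bar> - D)\<bar> \<le> T" using tb by eventually_elim (use D0 in auto)
    have i_g: "integrable ?M (\<lambda>x. \<bar>phibar x\<bar> * max 0 (\<bar>ubar x - ue x\<bar> - D))"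
      using int_mult_bdd[OF _ mxm mxb, of "\<lambda>x. \<bar>phibar x\<bar>"] phibI by auto
    have i_d: "integrable ?M (\<lambda>x. \<bar>phie x - phibar x\<bar>)" using phieI phibI by auto
    define G where "G = integral\<^sup>L ?M (\<lambda>x. \<bar>phibar x\<bar> * max 0 (\<bar>ubar x - ue x\<bar> - D))"
    define \<Delta> where "\<Delta> = integral\<^sup>L ?M (\<lambda>x. \<bar>phie x - phibar x\<bar>)"
    define X where "X = Jprime \<Omega> phie (\<lambda>x. ubar x - ue x) - Jprime \<Omega> phibar (\<lambda>x. ubar x - ue x)"
    define Jt where "Jt = Jprime \<Omega> phibar (\<lambda>x. ut x - ubar x)"
    define L1 where "L1 = L1_norm \<Omega> (\<lambda>x. ue x - ubar x)"
    define p where "p = 1 + 1 / varkappa"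
    have X_eq: "X = integral\<^sup>L ?M (\<lambda>x. (phie x - phibar x) * (ubar x - ue x))"
    proof -
      have "X = integral\<^sup>L ?M (\<lambda>x. phie x * (ubar x - ue x) - phibar x * (ubar x - ue x))"
        unfolding X_def Jprime_def using i_e i_b by (simp add: Bochner_Integration.integral_diff)
      then show ?thesis by (simp add: left_diff_distrib)
    qed
    have stepA: "X \<ge> G - D * \<Delta>"
    proof -
      have "integral\<^sup>L ?M (\<lambda>x. \<bar>phibar x\<bar> * max 0 (\<bar>ubar x - ue x\<bar> - D) - \<bar>phie x - phibar x\<bar> * D)
          \<le> integral\<^sup>L ?M (\<lambda>x. (phie x - phibar x) * (ubar x - ue x))"
        using PW i_g i_d i_e i_b
        by (intro integral_mono_AE) (auto simp: left_diff_distrib elim: eventually_mono)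
      moreover have "integral\<^sup>L ?M (\<lambda>x. \<bar>phibar x\<bar> * max 0 (\<bar>ubar x - ue x\<bar> - D) - \<bar>phie x - phibar x\<bar> * D)
          = G - D * \<Delta>"
        unfolding G_def \<Delta>_def using i_g i_d by (simp add: Bochner_Integration.integral_diff mult.commute)
      ultimately show ?thesis using X_eq by simp
    qed
    have stepB: "Jt \<le> G"
      unfolding Jt_def G_def Jprime_def using PW i_ut i_g
      by (intro integral_mono_AE) (auto elim: eventually_mono)
    have L1eq: "L1 = integral\<^sup>L ?M (\<lambda>x. \<bar>ubar x - ue x\<bar>)"
      unfolding L1_def L1_norm_def by (simp add: abs_minus_commute)
    have stepC: "1/2 * G \<ge> kp * L1 powr p - c1 * D powr (1/varkappa) * D"
      using growth_step[OF fm phibI tm tb Tpos A4_K A4_kappa D0 growth]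
      unfolding G_def L1eq kp_def c1_def p_def \<mu>_def by simp
    have real_ineq: "X \<ge> kp * L1 powr p + 1/2 * Jt - c1 * D powr (1/varkappa) * D - D * \<Delta>"
      using stepA stepB stepC by linarith
    have L10: "L1 \<ge> 0" unfolding L1_def L1_norm_def by (intro integral_nonneg_AE) auto
    have Dp0: "D powr (1/varkappa) \<ge> 0" by simp
    define m where "m = Linf_norm \<Omega> (\<lambda>x. phie x - phibar x)"
    have m0: "m \<ge> 0" unfolding m_def Linf_norm_def using esssup_nonneg[OF posM] .
    have final: "ereal X \<ge> ereal (kp * L1 powr p) + ereal (1/2 * Jt) - ereal c * (ereal (D powr (1/varkappa)) + m + ereal L1) * ereal D"
    proof (cases "D = 0")
      case True
      have z: "ereal c * (ereal (D powr (1/varkappa)) + m + ereal L1) * ereal D = 0"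
        using True by (simp add: zero_ereal_def[symmetric])
      show ?thesis unfolding z using real_ineq True by simp
    next
      case False
      then have Dpos: "D > 0" using D0 by simp
      show ?thesis
      proof (cases m)
        case PInf
        then show ?thesis using Dpos cpos by simp
      next
        case MInf
        then show ?thesis using m0 by simp
      next
        case (real m')
        have AEm: "AE x in ?M. \<bar>phie x - phibar x\<bar> \<le> m'"
        proof -
          have "AE x in ?M. ereal \<bar>phie x - phibar x\<bar> \<le> m"
            unfolding m_def Linf_norm_def by (rule esssup_AE)
          then show ?thesis by eventually_elim (use real in simp)
        qed
        have "\<Delta> \<le> integral\<^sup>L ?M (\<lambda>x. m')"
          unfolding \<Delta>_def using AEm i_d finite_measure.integrable_const[OF fm]
          by (intro integral_mono_AE) auto
        then have Dl: "\<Delta> \<le> \<mu> * m'" unfolding \<mu>_def by simp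
        have m'0: "m' \<ge> 0" using m0 real by simp
        have "D * \<Delta> \<le> D * (\<mu> * m')" using Dl D0 by (intro mult_left_mono) auto
        moreover have "c1 * (D powr (1/varkappa) * D) \<le> c * (D powr (1/varkappa) * D)"
          unfolding c_def using mu_pos Dp0 D0 by (intro mult_right_mono) auto
        moreover have "\<mu> * (m' * D) \<le> c * (m' * D)"
          unfolding c_def using c10 m'0 D0 by (intro mult_right_mono) auto
        moreover have "0 \<le> c * (L1 * D)" using cpos L10 D0 by simp
        moreover have "c * (D powr (1/varkappa) + m' + L1) * D
           = c * (D powr (1/varkappa) * D) + c * (m' * D) + c * (L1 * D)" by (simp add: algebra_simps)
        ultimately have "X \<ge> kp * L1 powr p + 1/2 * Jt - c * (D powr (1/varkappa) + m' + L1) * D"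
          using real_ineq by (simp add: algebra_simps)
        then show ?thesis using real by simp
      qed
    qed
    show "\<exists>u_e\<in>Uad \<Omega> \<alpha> \<beta> ebar.
         Linf_norm \<Omega> (\<lambda>x. ue x - u_e x) \<le> ereal (E_norm \<Omega> (pert_diff e ebar)) \<and>
         ereal (Jprime \<Omega> phie (\<lambda>x. ubar x - ue x) - Jprime \<Omega> phibar (\<lambda>x. ubar x - ue x))
         \<ge> ereal (kp * L1_norm \<Omega> (\<lambda>x. ue x - ubar x) powr (1 + 1 / varkappa))
           + ereal (1/2 * Jprime \<Omega> phibar (\<lambda>x. u_e x - ubar x))
           - ereal c * (ereal (E_norm \<Omega> (pert_diff e ebar) powr (1 / varkappa))
                        + Linf_norm \<Omega> (\<lambda>x. phie x - phibar x)
                        + ereal (L1_norm \<Omega> (\<lambda>x. ue x - ubar x)))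
                     * ereal (E_norm \<Omega> (pert_diff e ebar))"
    proof (rule bexI[OF _ utU], rule conjI)
      show "Linf_norm \<Omega> (\<lambda>x. ue x - ut x) \<le> ereal (E_norm \<Omega> (pert_diff e ebar))"
        using utL unfolding D_def .
      show "ereal (Jprime \<Omega> phie (\<lambda>x. ubar x - ue x) - Jprime \<Omega> phibar (\<lambda>x. ubar x - ue x))
         \<ge> ereal (kp * L1_norm \<Omega> (\<lambda>x. ue x - ubar x) powr (1 + 1 / varkappa))
           + ereal (1/2 * Jprime \<Omega> phibar (\<lambda>x. ut x - ubar x))
           - ereal c * (ereal (E_norm \<Omega> (pert_diff e ebar) powr (1 / varkappa))
                        + Linf_norm \<Omega> (\<lambda>x. phie x - phibar x)
                        + ereal (L1_norm \<Omega> (\<lambda>x. ue x - ubar x)))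
                     * ereal (E_norm \<Omega> (pert_diff e ebar))"
        using final unfolding X_def Jt_def L1_def p_def m_def D_def .
    qed
  qed
qed

end
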